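(* Let $X$ be a countable two-dimensional subshift of finite type whose subpattern poset $(X/\!\approx, \succcurlyeq)$ has at least two elements. Then $X$ contains two doubly periodic points $x, y$ (i.e. each invariant under some shift by $(r,0)$ and by $(0,r)$ with $r>0$) with $x \not\approx y$.
   Context: A two-dimensional SFT is the set of configurations in $S^{\mathbb{Z}^2}$ ($S$ finite) avoiding a finite set of forbidden finite patterns. For configurations $x,y$, $x \succcurlyeq y$ means every finite pattern occurring in $y$ also occurs in $x$; $x \approx y$ means $x \succcurlyeq y$ and $y \succcurlyeq x$. The subpattern poset of $X$ is $(X/\!\approx, \succcurlyeq)$. *)

theory Defs
  imports Main "HOL-Library.Countable_Set"
begin

type_synonym 's config = "int \<times> int \<Rightarrow> 's"

type_synonym 's pattern = "int \<times> int \<Rightarrow> 's option"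

definition finite_pattern :: "'s pattern \<Rightarrow> bool" where
  "finite_pattern p \<longleftrightarrow> finite (dom p)"

definition occurs_in :: "'s pattern \<Rightarrow> 's config \<Rightarrow> bool" where
  "occurs_in p x \<longleftrightarrow> (\<exists>a b. \<forall>i j. (i, j) \<in> dom p \<longrightarrow> Some (x (i + a, j + b)) = p (i, j))"

definition is_SFT :: "('s::finite) config set \<Rightarrow> bool" where
  "is_SFT X \<longleftrightarrow> (\<exists>F. finite F \<and> (\<forall>p\<in>F. finite_pattern p) \<and>
      X = {x. \<forall>p\<in>F. \<not> occurs_in p x})"

definition subpat_ge :: "'s config \<Rightarrow> 's config \<Rightarrow> bool" where
  "subpat_ge x y \<longleftrightarrow> (\<forall>p. finite_pattern p \<longrightarrow> occurs_in p y \<longrightarrow> occurs_in p x)"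

definition subpat_equiv :: "'s config \<Rightarrow> 's config \<Rightarrow> bool" where
  "subpat_equiv x y \<longleftrightarrow> subpat_ge x y \<and> subpat_ge y x"

definition doubly_periodic :: "'s config \<Rightarrow> bool" where
  "doubly_periodic x \<longleftrightarrow> (\<exists>r::int. r > 0 \<and>
      (\<forall>i j. x (i + r, j) = x (i, j)) \<and> (\<forall>i j. x (i, j + r) = x (i, j)))"

end

theory Submission
  imports Defs "HOL-Analysis.Analysis"
begin

definition sq :: "int \<Rightarrow> (int \<times> int) set" where
  "sq n = {-n..n} \<times> {-n..n}"

definition cyl :: "int \<Rightarrow> 's config \<Rightarrow> 's config set" where
  "cyl n x = {y. \<forall>u\<in>sq n. y u = x u}"

definition CT :: "('s config) topology" where
  "CT = product_topology (\<lambda>_. discrete_topology UNIV) UNIV"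

definition cclosed :: "'s config set \<Rightarrow> bool" where
  "cclosed S \<longleftrightarrow> (\<forall>x. (\<forall>n. \<exists>y\<in>S. y \<in> cyl n x) \<longrightarrow> x \<in> S)"

lemma finite_sq[simp]: "finite (sq n)"
  by (simp add: sq_def)

lemma cyl_self[simp]: "x \<in> cyl n x"
  by (simp add: cyl_def)

lemma topspace_CT[simp]: "topspace CT = UNIV"
  by (simp add: CT_def PiE_UNIV_domain)

lemma openin_cyl: "openin CT (cyl n x)"
  unfolding CT_def openin_product_topology_alt
proof (intro ballI)
  fix y assume y: "y \<in> cyl n x"
  define U where "U i = (if i \<in> sq n then {x i} else UNIV)" for i
  have "{i \<in> UNIV. U i \<noteq> topspace (discrete_topology UNIV)} \<subseteq> sq n"
    by (auto simp: U_def)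
  hence f: "finite {i \<in> UNIV. U i \<noteq> topspace (discrete_topology UNIV)}"
    using finite_subset finite_sq by blast
  have o: "\<forall>i\<in>UNIV. openin (discrete_topology UNIV) (U i)" by simp
  have m: "y \<in> Pi\<^sub>E UNIV U" using y unfolding U_def cyl_def PiE_UNIV_domain by (simp add: Pi_iff)
  have s: "Pi\<^sub>E UNIV U \<subseteq> cyl n x"
  proof
    fix f assume "f \<in> Pi\<^sub>E UNIV U"
    hence fu: "f u \<in> U u" for u by (rule PiE_mem) simp
    have "f u = x u" if "u \<in> sq n" for u using fu[of u] that by (simp add: U_def)
    thus "f \<in> cyl n x" by (simp add: cyl_def)
  qed
  show "\<exists>U. finite {i \<in> UNIV. U i \<noteq> topspace (discrete_topology UNIV)} \<and>
             (\<forall>i\<in>UNIV. openin (discrete_topology UNIV) (U i)) \<and> y \<in> Pi\<^sub>E UNIV U \<and> Pi\<^sub>E UNIV U \<subseteq> cyl n x"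
    using f o m s by blast
qed

lemma finite_in_box: "finite A \<Longrightarrow> \<exists>n\<ge>0. A \<subseteq> sq n"
proof (induction A rule: finite_induct)
  case empty then show ?case by auto
next
  case (insert a A)
  then obtain n where n: "n \<ge> 0" "A \<subseteq> sq n" by auto
  define m where "m = max n (max \<bar>fst a\<bar> \<bar>snd a\<bar>)"
  have "sq n \<subseteq> sq m" by (auto simp: sq_def m_def)
  moreover have "a \<in> sq m" by (cases a) (auto simp: sq_def m_def)
  ultimately show ?case using n by (intro exI[of _ m]) (auto simp: m_def)
qed

lemma open_cyl_sub: assumes "openin CT U" "x \<in> U" shows "\<exists>n. cyl n x \<subseteq> U"
proof -
  from assms obtain V where V: "finite {i \<in> UNIV. V i \<noteq> topspace (discrete_topology UNIV)}"
    "x \<in> Pi\<^sub>E UNIV V" "Pi\<^sub>E UNIV V \<subseteq> U"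
    unfolding CT_def openin_product_topology_alt by blast
  then obtain n where n: "{i. V i \<noteq> UNIV} \<subseteq> sq n" using finite_in_box by fastforce
  have "cyl n x \<subseteq> Pi\<^sub>E UNIV V"
  proof
    fix y assume y: "y \<in> cyl n x"
    have "y i \<in> V i" for i
    proof (cases "i \<in> sq n")
      case True then show ?thesis using y V(2) by (auto simp: cyl_def)
    next
      case False then show ?thesis using n by auto
    qed
    thus "y \<in> Pi\<^sub>E UNIV V" by auto
  qed
  thus ?thesis using V(3) by blast
qed

lemma compact_CT: "compact_space (CT :: ('s::finite) config topology)"
  unfolding CT_def compact_space_product_topology
  by (simp add: compact_space_discrete_topology)

lemma Hausdorff_CT: "Hausdorff_space CT"
  unfolding CT_def Hausdorff_space_product_topology by simp

lemma cclosed_closedin: assumes "cclosed S" shows "closedin CT S"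
proof -
  have "openin CT (UNIV - S)"
  proof (subst openin_subopen, intro ballI)
    fix x assume "x \<in> UNIV - S"
    with assms obtain n where "\<forall>y\<in>S. y \<notin> cyl n x" unfolding cclosed_def by blast
    thus "\<exists>T. openin CT T \<and> x \<in> T \<and> T \<subseteq> UNIV - S"
      by (intro exI[of _ "cyl n x"]) (auto simp: openin_cyl)
  qed
  thus ?thesis by (simp add: closedin_def)
qed

lemma baire_isolated:
  fixes S :: "('s::finite) config set"
  assumes "countable S" "cclosed S" "S \<noteq> {}"
  shows "\<exists>x\<in>S. \<exists>n. \<forall>y\<in>S. y \<in> cyl n x \<longrightarrow> y = x"
proof -
  let ?Y = "subtopology CT S"
  have cl: "closedin CT S" using cclosed_closedin assms by blast
  have cpt: "compact_space ?Y"
    by (rule compact_space_subtopology) (use cl compact_CT closedin_compact_space in blast)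
  have hd: "Hausdorff_space ?Y" using Hausdorff_CT Hausdorff_space_subtopology by blast
  have reg: "regular_space ?Y" using cpt hd compact_Hausdorff_imp_regular_space by blast
  have lc: "locally_compact_space ?Y" using cpt compact_imp_locally_compact_space by blast
  have tsY: "topspace ?Y = S" by simp
  show ?thesis
  proof (rule ccontr)
    assume nex: "\<not> ?thesis"
    have "?Y interior_of \<Union>((\<lambda>x. {x}) ` S) = {}"
    proof (rule Baire_category_alt)
      show "completely_metrizable_space ?Y \<or> locally_compact_space ?Y \<and> regular_space ?Y"
        using lc reg by blast
      show "countable ((\<lambda>x. {x}) ` S)" using assms(1) by simp
      fix T assume "T \<in> (\<lambda>x. {x}) ` S"
      then obtain x where x: "x \<in> S" "T = {x}" by blast
      have "closedin ?Y {x}" using hd x by (simp add: closedin_Hausdorff_singleton)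
      moreover have "?Y interior_of {x} = {}"
      proof (rule ccontr)
        assume "?Y interior_of {x} \<noteq> {}"
        hence "openin ?Y {x}"
          by (metis interior_of_subset openin_interior_of subset_singletonD)
        then obtain U where U: "openin CT U" "{x} = U \<inter> S" by (auto simp: openin_subtopology)
        then obtain n where "cyl n x \<subseteq> U" using open_cyl_sub by blast
        hence "\<forall>y\<in>S. y \<in> cyl n x \<longrightarrow> y = x" using U by blast
        thus False using nex x by blast
      qed
      ultimately show "closedin ?Y T \<and> ?Y interior_of T = {}" using x by simp
    qed
    moreover have "\<Union>((\<lambda>x. {x}) ` S) = topspace ?Y" by auto
    moreover have "?Y interior_of S = S" by (metis interior_of_topspace tsY)
    ultimately show False using assms(3) by simp
  qed
qed


lemma cclosed_Int: "cclosed A \<Longrightarrow> cclosed B \<Longrightarrow> cclosed (A \<inter> B)"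
proof -
  assume a: "cclosed A" and b: "cclosed B"
  have m: "y \<in> cyl n x" if "y \<in> cyl n' x" "n \<le> n'" for x y :: "'a config" and n n'
    using that by (auto simp: cyl_def sq_def)
  show ?thesis unfolding cclosed_def
  proof (intro allI impI)
    fix x assume h: "\<forall>n. \<exists>y\<in>A \<inter> B. y \<in> cyl n x"
    have "x \<in> A" using a h unfolding cclosed_def by blast
    moreover have "x \<in> B" using b h unfolding cclosed_def by blast
    ultimately show "x \<in> A \<inter> B" by blast
  qed
qed

lemma cclosed_Inter: "\<forall>C\<in>\<C>. cclosed C \<Longrightarrow> cclosed (\<Inter>\<C>)"
  unfolding cclosed_def by blast

lemma bw:
  fixes A :: "('s::finite) config set"
  assumes "infinite A" "A \<subseteq> S" "cclosed S"
  shows "\<exists>w\<in>S. \<forall>n. \<exists>y\<in>A. y \<noteq> w \<and> y \<in> cyl n w"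
proof -
  have "CT derived_set_of A \<noteq> {}"
    using compact_space_imp_Bolzano_Weierstrass[OF compact_CT assms(1)] by simp
  then obtain w where w: "w \<in> CT derived_set_of A" by blast
  have *: "\<forall>n. \<exists>y\<in>A. y \<noteq> w \<and> y \<in> cyl n w"
  proof
    fix n
    show "\<exists>y\<in>A. y \<noteq> w \<and> y \<in> cyl n w"
      using w openin_cyl[of n w] cyl_self[of w n] unfolding in_derived_set_of by blast
  qed
  hence "w \<in> S" using assms(2,3) unfolding cclosed_def by blast
  thus ?thesis using * by blast
qed

lemma chain_inter:
  fixes E :: "('s::finite) config set"
  assumes "\<C> \<noteq> {}" "\<forall>C\<in>\<C>. cclosed C \<and> C \<inter> E \<noteq> {}" "cclosed E" "chain\<^sub>\<subseteq> \<C>"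
  shows "\<Inter>\<C> \<inter> E \<noteq> {}"
proof -
  let ?U = "(\<lambda>C. C \<inter> E) ` \<C>"
  have "\<Inter>?U \<noteq> {}"
  proof (rule compact_CT[unfolded compact_space_fip, rule_format], intro conjI ballI allI impI)
    fix C assume "C \<in> ?U"
    then show "closedin CT C" using assms(2,3) cclosed_Int cclosed_closedin by blast
  next
    fix F assume F: "finite F \<and> F \<subseteq> ?U"
    then obtain G where G: "G \<subseteq> \<C>" "finite G" "F = (\<lambda>C. C \<inter> E) ` G"
      by (meson finite_subset_image)
    show "\<Inter>F \<noteq> {}"
    proof (cases "G = {}")
      case True then show ?thesis using G by simp
    next
      case False
      have "subset.chain UNIV G" using assms(4) G(1)
        unfolding chain_subset_alt_def subset.chain_def by blast
      hence "\<Inter>G \<in> G" using Inter_in_chain G(2) False by blast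
      hence "\<Inter>G \<inter> E \<noteq> {}" using assms(2) G(1) by blast
      moreover have "\<Inter>F = \<Inter>G \<inter> E" using G(3) False by auto
      ultimately show ?thesis by simp
    qed
  qed
  moreover have "\<Inter>?U = \<Inter>\<C> \<inter> E" using assms(1) by auto
  ultimately show ?thesis by simp
qed

lemma zorn_min:
  assumes "\<A> \<noteq> {}" and ch: "\<And>\<C>. \<C> \<subseteq> \<A> \<Longrightarrow> \<C> \<noteq> {} \<Longrightarrow> chain\<^sub>\<subseteq> \<C> \<Longrightarrow> \<Inter>\<C> \<in> \<A>"
  shows "\<exists>M\<in>\<A>. \<forall>Y\<in>\<A>. Y \<subseteq> M \<longrightarrow> Y = M"
proof -
  have "\<exists>M\<in>uminus ` \<A>. \<forall>Y\<in>uminus ` \<A>. M \<subseteq> Y \<longrightarrow> Y = M"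
  proof (rule Zorn_Lemma2, intro ballI)
    fix C assume C: "C \<in> chains (uminus ` \<A>)"
    show "\<exists>U\<in>uminus ` \<A>. \<forall>X\<in>C. X \<subseteq> U"
    proof (cases "C = {}")
      case True
      then obtain A where "A \<in> \<A>" using assms(1) by blast
      then show ?thesis using True by blast
    next
      case False
      let ?D = "uminus ` C"
      have Csub: "C \<subseteq> uminus ` \<A>" using C by (simp add: chains_def)
      have D1: "?D \<subseteq> \<A>"
      proof
        fix x assume "x \<in> ?D"
        then obtain c where "c \<in> C" "x = - c" by blast
        then obtain a where "a \<in> \<A>" "c = - a" using Csub by blast
        thus "x \<in> \<A>" using \<open>x = - c\<close> by simp
      qed
      have cc: "chain\<^sub>\<subseteq> C" using C by (simp add: chains_def)
      have D2: "chain\<^sub>\<subseteq> ?D" unfolding chain_subset_def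
      proof (intro ballI)
        fix a b assume "a \<in> ?D" "b \<in> ?D"
        then obtain a' b' where "a' \<in> C" "b' \<in> C" "a = - a'" "b = - b'" by blast
        thus "a \<subseteq> b \<or> b \<subseteq> a" using cc unfolding chain_subset_def by blast
      qed
      have "?D \<noteq> {}" using False by blast
      hence I: "\<Inter>?D \<in> \<A>" using ch[OF D1] D2 by blast
      have "\<forall>X\<in>C. X \<subseteq> - \<Inter>?D" by blast
      moreover have "- \<Inter>?D \<in> uminus ` \<A>" using I by (rule imageI)
      ultimately show ?thesis by blast
    qed
  qed
  then obtain M where M: "M \<in> uminus ` \<A>" "\<forall>Y\<in>uminus ` \<A>. M \<subseteq> Y \<longrightarrow> Y = M" by blast
  show ?thesis
  proof (intro bexI[of _ "-M"] ballI impI)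
    show "-M \<in> \<A>" using M(1) by auto
    fix Y assume "Y \<in> \<A>" "Y \<subseteq> -M"
    hence "-Y \<in> uminus ` \<A>" "M \<subseteq> -Y" by auto
    hence "-Y = M" using M(2) by blast
    thus "Y = -M" by auto
  qed
qed


definition sh :: "int \<times> int \<Rightarrow> 's config \<Rightarrow> 's config" where
  "sh s x = (\<lambda>u. x (u + s))"

definition inv :: "'s config set \<Rightarrow> bool" where
  "inv S \<longleftrightarrow> (\<forall>x\<in>S. \<forall>s. sh s x \<in> S)"

definition orbcl :: "'s config \<Rightarrow> 's config set" where
  "orbcl z = {w. \<forall>n. \<exists>s. sh s z \<in> cyl n w}"

definition isol :: "'s config set \<Rightarrow> 's config \<Rightarrow> bool" where
  "isol S x \<longleftrightarrow> x \<in> S \<and> (\<exists>n. \<forall>y\<in>S. y \<in> cyl n x \<longrightarrow> y = x)"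

lemma sh_sh[simp]: "sh a (sh b x) = sh (a + b) x"
  by (rule ext) (simp add: sh_def add_ac)

lemma sh_0[simp]: "sh 0 x = x"
  by (simp add: sh_def)

lemma sh_neg[simp]: "sh (-s) (sh s x) = x"
  by simp

lemma cyl_mono: "y \<in> cyl n' x \<Longrightarrow> n \<le> n' \<Longrightarrow> y \<in> cyl n x"
  by (auto simp: cyl_def sq_def)

lemma cyl_sym: "y \<in> cyl n x \<Longrightarrow> x \<in> cyl n y"
  by (simp add: cyl_def)

lemma cyl_trans: "y \<in> cyl n x \<Longrightarrow> z \<in> cyl n y \<Longrightarrow> z \<in> cyl n x"
  by (simp add: cyl_def)

lemma mem_sq: "u \<in> sq n \<longleftrightarrow> \<bar>fst u\<bar> \<le> n \<and> \<bar>snd u\<bar> \<le> n"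
  by (cases u) (simp add: sq_def abs_le_iff, arith)

lemma cyl_sh: assumes "y \<in> cyl (n + \<bar>fst s\<bar> + \<bar>snd s\<bar>) x" shows "sh s y \<in> cyl n (sh s x)"
proof -
  have "u + s \<in> sq (n + \<bar>fst s\<bar> + \<bar>snd s\<bar>)" if "u \<in> sq n" for u
  proof -
    have a: "\<bar>fst u + fst s\<bar> \<le> \<bar>fst u\<bar> + \<bar>fst s\<bar>" by (rule abs_triangle_ineq)
    have b: "\<bar>snd u + snd s\<bar> \<le> \<bar>snd u\<bar> + \<bar>snd s\<bar>" by (rule abs_triangle_ineq)
    have c: "\<bar>fst u\<bar> \<le> n" "\<bar>snd u\<bar> \<le> n" using that by (simp_all add: mem_sq)
    have d: "0 \<le> \<bar>fst s\<bar>" "0 \<le> \<bar>snd s\<bar>" by simp_all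
    show ?thesis unfolding mem_sq fst_add snd_add using a b c d by linarith
  qed
  thus ?thesis using assms unfolding cyl_def sh_def by blast
qed

lemma orbcl_self: "z \<in> orbcl z"
proof -
  have "\<forall>n. sh 0 z \<in> cyl n z" by simp
  thus ?thesis unfolding orbcl_def by blast
qed

lemma orbcl_cclosed: "cclosed (orbcl z)"
  unfolding cclosed_def orbcl_def
proof (intro allI impI CollectI)
  fix x n assume h: "\<forall>n. \<exists>y\<in>{w. \<forall>n. \<exists>s. sh s z \<in> cyl n w}. y \<in> cyl n x"
  then obtain y where y: "\<forall>n. \<exists>s. sh s z \<in> cyl n y" "y \<in> cyl n x" by blast
  then obtain s where "sh s z \<in> cyl n y" by blast
  thus "\<exists>s. sh s z \<in> cyl n x" using y(2) cyl_trans cyl_sym by metis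
qed

lemma orbcl_inv: "inv (orbcl z)"
  unfolding inv_def
proof (intro ballI allI)
  fix w s assume w: "w \<in> orbcl z"
  show "sh s w \<in> orbcl z" unfolding orbcl_def
  proof (intro CollectI allI)
    fix n
    obtain t where "sh t z \<in> cyl (n + \<bar>fst s\<bar> + \<bar>snd s\<bar>) w" using w unfolding orbcl_def by blast
    hence "sh s (sh t z) \<in> cyl n (sh s w)" by (rule cyl_sh)
    thus "\<exists>t. sh t z \<in> cyl n (sh s w)" by (metis sh_sh)
  qed
qed

lemma orbcl_sub: assumes "cclosed C" "inv C" "z \<in> C" shows "orbcl z \<subseteq> C"
proof
  fix w assume "w \<in> orbcl z"
  hence "\<forall>n. \<exists>y\<in>C. y \<in> cyl n w" using assms(2,3) unfolding orbcl_def inv_def by blast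
  thus "w \<in> C" using assms(1) unfolding cclosed_def by blast
qed

lemma isol_sh: assumes "inv C" "isol C x" shows "isol C (sh s x)"
proof -
  obtain n where n: "\<forall>y\<in>C. y \<in> cyl n x \<longrightarrow> y = x" "x \<in> C" using assms(2) unfolding isol_def by blast
  let ?m = "n + \<bar>fst (-s)\<bar> + \<bar>snd (-s)\<bar>"
  have "\<forall>y\<in>C. y \<in> cyl ?m (sh s x) \<longrightarrow> y = sh s x"
  proof (intro ballI impI)
    fix y assume y: "y \<in> C" "y \<in> cyl ?m (sh s x)"
    have "sh (-s) y \<in> cyl n (sh (-s) (sh s x))" using y(2) by (rule cyl_sh)
    hence "sh (-s) y \<in> cyl n x" by simp
    moreover have "sh (-s) y \<in> C" using y(1) assms(1) unfolding inv_def by blast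
    ultimately have "sh (-s) y = x" using n by blast
    hence "sh s (sh (-s) y) = sh s x" by simp
    thus "y = sh s x" by simp
  qed
  moreover have "sh s x \<in> C" using n(2) assms(1) unfolding inv_def by blast
  ultimately show ?thesis unfolding isol_def by blast
qed

lemma isol_in_orbcl: assumes "inv C" "z \<in> C" "isol C u" "u \<in> orbcl z" shows "\<exists>s. u = sh s z"
proof -
  obtain n where n: "\<forall>y\<in>C. y \<in> cyl n u \<longrightarrow> y = u" using assms(3) unfolding isol_def by blast
  obtain s where "sh s z \<in> cyl n u" using assms(4) unfolding orbcl_def by blast
  moreover have "sh s z \<in> C" using assms(1,2) unfolding inv_def by blast
  ultimately show ?thesis using n by metis
qed

lemma key_finite:
  fixes X :: "('s::finite) config set"
  assumes X: "cclosed X" "inv X" "countable X" and E: "cclosed E" "X \<inter> E \<noteq> {}"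
  shows "\<exists>z\<in>X \<inter> E. \<forall>V. (\<forall>v\<in>V. sh v z \<in> E) \<longrightarrow> finite ((\<lambda>v. sh v z) ` V)"
proof -
  define \<A> where "\<A> = {C. C \<subseteq> X \<and> cclosed C \<and> inv C \<and> C \<inter> E \<noteq> {}}"
  have "X \<in> \<A>" using X E unfolding \<A>_def by blast
  hence ne: "\<A> \<noteq> {}" by blast
  have "\<exists>M\<in>\<A>. \<forall>Y\<in>\<A>. Y \<subseteq> M \<longrightarrow> Y = M"
  proof (rule zorn_min[OF ne])
    fix \<C> assume C: "\<C> \<subseteq> \<A>" "\<C> \<noteq> {}" "chain\<^sub>\<subseteq> \<C>"
    have "\<Inter>\<C> \<subseteq> X" using C(1,2) unfolding \<A>_def by blast
    moreover have "cclosed (\<Inter>\<C>)" using C(1) cclosed_Inter unfolding \<A>_def by blast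
    moreover have "inv (\<Inter>\<C>)" using C(1) unfolding \<A>_def inv_def by blast
    moreover have "\<Inter>\<C> \<inter> E \<noteq> {}" using chain_inter[OF C(2) _ E(1) C(3)] C(1) unfolding \<A>_def by blast
    ultimately show "\<Inter>\<C> \<in> \<A>" unfolding \<A>_def by blast
  qed
  then obtain M where M: "M \<in> \<A>" "\<forall>Y\<in>\<A>. Y \<subseteq> M \<longrightarrow> Y = M" by blast
  have Mp: "M \<subseteq> X" "cclosed M" "inv M" "M \<inter> E \<noteq> {}" using M(1) unfolding \<A>_def by auto
  have A: "orbcl w = M" if "w \<in> M \<inter> E" for w
  proof -
    have "orbcl w \<subseteq> M" using orbcl_sub Mp(2,3) that by blast
    moreover have "orbcl w \<in> \<A>" unfolding \<A>_def
      using orbcl_cclosed orbcl_inv orbcl_self that \<open>orbcl w \<subseteq> M\<close> Mp(1) by blast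
    ultimately show ?thesis using M(2) by blast
  qed
  have "countable M" using Mp(1) X(3) countable_subset by blast
  then obtain u where u: "isol M u"
    using baire_isolated[of M] Mp(2,4) unfolding isol_def by blast
  have B: "isol M w" if "w \<in> M \<inter> E" for w
  proof -
    have "u \<in> orbcl w" using A[OF that] u unfolding isol_def by blast
    moreover have "w \<in> M" using that by blast
    ultimately obtain s where "u = sh s w" using isol_in_orbcl[OF Mp(3) _ u] by blast
    hence "w = sh (-s) u" by simp
    thus ?thesis using isol_sh[OF Mp(3) u] by simp
  qed
  obtain z where z: "z \<in> M \<inter> E" using Mp(4) by blast
  have "\<forall>V. (\<forall>v\<in>V. sh v z \<in> E) \<longrightarrow> finite ((\<lambda>v. sh v z) ` V)"
  proof (intro allI impI, rule ccontr)
    fix V assume V: "\<forall>v\<in>V. sh v z \<in> E" "infinite ((\<lambda>v. sh v z) ` V)"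
    have sub: "(\<lambda>v. sh v z) ` V \<subseteq> M \<inter> E" using V(1) z Mp(3) unfolding inv_def by blast
    obtain w where w: "w \<in> M \<inter> E" "\<forall>n. \<exists>y\<in>(\<lambda>v. sh v z) ` V. y \<noteq> w \<and> y \<in> cyl n w"
      using bw[OF V(2) sub cclosed_Int[OF Mp(2) E(1)]] by blast
    obtain n where n: "\<forall>y\<in>M. y \<in> cyl n w \<longrightarrow> y = w" using B[OF w(1)] unfolding isol_def by blast
    show False using w(2) n sub by blast
  qed
  thus ?thesis using z Mp(1) by blast
qed


definition per :: "int \<times> int \<Rightarrow> 's config \<Rightarrow> bool" where
  "per d z \<longleftrightarrow> (\<forall>u. z (u + d) = z u)"

definition smul :: "int \<Rightarrow> int \<times> int \<Rightarrow> int \<times> int" where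
  "smul k v = (k * fst v, k * snd v)"

lemma smul_simps[simp]: "fst (smul k v) = k * fst v" "snd (smul k v) = k * snd v"
  by (simp_all add: smul_def)

lemma per_neg: assumes "per d z" shows "per (-d) z"
  unfolding per_def
proof
  fix u
  have "z ((u + -d) + d) = z (u + -d)" using assms unfolding per_def by blast
  moreover have "(u + -d) + d = u" by (simp add: algebra_simps)
  ultimately show "z (u + -d) = z u" by simp
qed

lemma per_add: assumes "per d z" "per e z" shows "per (d + e) z"
  unfolding per_def
proof
  fix u
  have "z ((u + d) + e) = z (u + d)" "z (u + d) = z u" using assms unfolding per_def by blast+
  moreover have "u + (d + e) = (u + d) + e" by (rule add.assoc[symmetric])
  ultimately show "z (u + (d + e)) = z u" by metis
qed

lemma per_smul_nat: "per d z \<Longrightarrow> per (smul (int n) d) z"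
proof (induction n)
  case 0
  have "smul (int 0) d = 0" by (simp add: smul_def zero_prod_def)
  then show ?case by (simp add: per_def)
next
  case (Suc n)
  have "smul (int (Suc n)) d = smul (int n) d + d"
    by (simp add: smul_def algebra_simps plus_prod_def)
  then show ?case using per_add Suc by metis
qed

lemma per_smul: assumes "per d z" shows "per (smul k d) z"
proof (cases "k \<ge> 0")
  case True
  then obtain n where "k = int n" by (metis nonneg_eq_int)
  then show ?thesis using per_smul_nat assms by blast
next
  case False
  then obtain n where n: "k = - int n" by (metis nonpos_int_cases linear)
  have "smul k d = - smul (int n) d" by (simp add: smul_def n uminus_prod_def)
  then show ?thesis using per_neg per_smul_nat assms by metis
qed

lemma per_apply: "per d z \<Longrightarrow> z (u + d) = z u"
  unfolding per_def by blast

lemma per_Pair: "per (a, b) z \<longleftrightarrow> (\<forall>i j. z (i + a, j + b) = z (i, j))"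
  unfolding per_def by auto

lemma dp_two:
  assumes "per d z" "per e z" "fst d * snd e - snd d * fst e \<noteq> 0"
  shows "doubly_periodic z"
proof -
  define D where "D = fst d * snd e - snd d * fst e"
  have "smul (snd e) d + smul (- snd d) e = (D, 0)"
    by (simp add: D_def plus_prod_def algebra_simps)
  hence p1: "per (D, 0) z" using per_add per_smul assms(1,2) by metis
  have "smul (- fst e) d + smul (fst d) e = (0, D)"
    by (simp add: D_def plus_prod_def algebra_simps)
  hence p2: "per (0, D) z" using per_add per_smul assms(1,2) by metis
  have q1: "per (\<bar>D\<bar>, 0) z" "per (0, \<bar>D\<bar>) z"
  proof -
    have "(\<bar>D\<bar>, 0) = (D, 0) \<or> (\<bar>D\<bar>, 0) = - (D, (0::int))" by (simp add: abs_if)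
    thus "per (\<bar>D\<bar>, 0) z" using p1 per_neg by metis
    have "(0, \<bar>D\<bar>) = (0, D) \<or> (0, \<bar>D\<bar>) = - ((0::int), D)" by (simp add: abs_if)
    thus "per (0, \<bar>D\<bar>) z" using p2 per_neg by metis
  qed
  have "D \<noteq> 0" unfolding D_def by (rule assms(3))
  hence "\<bar>D\<bar> > 0" by (simp only: zero_less_abs_iff not_False_eq_True)
  thus ?thesis using q1 unfolding doubly_periodic_def per_Pair by (intro exI[of _ "\<bar>D\<bar>"]) simp
qed

lemma dp_per: assumes "doubly_periodic z" shows "\<exists>r>0. per (r, 0) z \<and> per (0, r) z"
  using assms unfolding doubly_periodic_def per_Pair by auto

lemma sh_eq_per: assumes "sh v z = sh v' z" shows "per (v - v') z"
  unfolding per_def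
proof
  fix u
  have "sh v z (u - v') = sh v' z (u - v')" using assms by simp
  thus "z (u + (v - v')) = z u" by (simp add: sh_def algebra_simps)
qed

lemma finite_orbit_dp:
  assumes "finite (range (\<lambda>v. sh v z))"
  shows "doubly_periodic z"
proof -
  have per1: "\<exists>a. a \<noteq> 0 \<and> per (smul a w) z" for w :: "int \<times> int"
  proof -
    let ?f = "\<lambda>k::nat. sh (smul (int k) w) z"
    have "range ?f \<subseteq> range (\<lambda>v. sh v z)" by (rule image_subsetI) (rule rangeI)
    hence "finite (range ?f)" using assms by (rule finite_subset)
    have "\<not> inj ?f"
    proof
      assume "inj ?f"
      hence "finite (UNIV :: nat set)" using finite_imageD[OF \<open>finite (range ?f)\<close>] by blast
      thus False by simp
    qed
    then obtain i j where ij: "i \<noteq> j" "?f i = ?f j" unfolding inj_def by blast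
    hence "per (smul (int i) w - smul (int j) w) z" using sh_eq_per by blast
    moreover have "smul (int i) w - smul (int j) w = smul (int i - int j) w"
      by (simp add: prod_eq_iff algebra_simps)
    moreover have "int i - int j \<noteq> 0" using ij(1) by simp
    ultimately show ?thesis by (intro exI[of _ "int i - int j"]) simp
  qed
  obtain a where a: "a \<noteq> 0" "per (smul a (1, 0)) z" using per1[of "(1, 0)"] by blast
  obtain b where b: "b \<noteq> 0" "per (smul b (0, 1)) z" using per1[of "(0, 1)"] by blast
  show ?thesis
    by (rule dp_two[OF a(2) b(2)]) (simp add: a(1) b(1))
qed


definition good :: "'s config \<Rightarrow> int \<Rightarrow> 's config \<Rightarrow> int \<times> int \<Rightarrow> bool" where
  "good p r z v \<longleftrightarrow> (\<exists>t. \<forall>u\<in>sq r. z (v + u) = p (t + u))"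

definition sft :: "'s config \<Rightarrow> int \<Rightarrow> 's config \<Rightarrow> int \<times> int \<Rightarrow> int \<times> int" where
  "sft p r z v = (SOME t. \<forall>u\<in>sq r. z (v + u) = p (t + u)) - v"

definition ph :: "'s config \<Rightarrow> int \<Rightarrow> 's config \<Rightarrow> int \<times> int \<Rightarrow> 's config" where
  "ph p r z v = (\<lambda>x. p (x + sft p r z v))"

definition lam :: "int \<Rightarrow> int \<Rightarrow> int \<times> int \<Rightarrow> int" where
  "lam a b v = a * fst v + b * snd v"

lemma lam_add[simp]: "lam a b (u + v) = lam a b u + lam a b v"
  by (simp add: lam_def algebra_simps)

lemma lam_diff[simp]: "lam a b (u - v) = lam a b u - lam a b v"
  by (simp add: lam_def algebra_simps)

lemma lam_smul[simp]: "lam a b (smul k v) = k * lam a b v"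
  by (simp add: lam_def algebra_simps)

lemma good_ph:
  assumes "good p r z v" "u \<in> sq r"
  shows "z (v + u) = ph p r z v (v + u)"
proof -
  let ?t = "SOME t. \<forall>u\<in>sq r. z (v + u) = p (t + u)"
  have t: "\<forall>u\<in>sq r. z (v + u) = p (?t + u)"
    using assms(1) unfolding good_def by (rule someI_ex)
  have eq: "v + u + (?t - v) = ?t + u" by (simp add: prod_eq_iff)
  have "ph p r z v (v + u) = p (v + u + (?t - v))" by (simp only: ph_def sft_def)
  also have "\<dots> = p (?t + u)" by (simp only: eq)
  also have "\<dots> = z (v + u)" using bspec[OF t assms(2)] by (rule sym)
  finally show ?thesis by (rule sym)
qed

lemma zero_sq: "r \<ge> 0 \<Longrightarrow> (0::int\<times>int) \<in> sq r"
  by (simp add: mem_sq)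

lemma good_self: assumes "good p r z v" "r \<ge> 0" shows "z v = ph p r z v v"
  using good_ph[OF assms(1) zero_sq[OF assms(2)]] by simp

lemma per_shift_fun: assumes "per d p" shows "per d (\<lambda>x. p (x + s))"
  unfolding per_def
proof
  fix u
  have "p ((u + s) + d) = p (u + s)" using assms unfolding per_def by blast
  moreover have "u + d + s = (u + s) + d" by (simp add: prod_eq_iff)
  ultimately show "p (u + d + s) = p (u + s)" by metis
qed

lemma ph_per: "per d p \<Longrightarrow> per d (ph p r z v)"
  unfolding ph_def by (rule per_shift_fun)

lemma agree_block:
  fixes f g :: "'s config"
  assumes r: "r > 0" and f: "per (r, 0) f" "per (0, r) f" and g: "per (r, 0) g" "per (0, r) g"
    and ag: "\<And>x. a1 \<le> fst x \<Longrightarrow> fst x < a1 + r \<Longrightarrow> a2 \<le> snd x \<Longrightarrow> snd x < a2 + r \<Longrightarrow> f x = g x"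
  shows "f = g"
proof
  fix x :: "int \<times> int"
  define q1 where "q1 = (fst x - a1) div r"
  define q2 where "q2 = (snd x - a2) div r"
  define x' where "x' = (a1 + (fst x - a1) mod r, a2 + (snd x - a2) mod r)"
  have xx: "x = x' + smul q1 (r, 0) + smul q2 (0, r)"
    unfolding x'_def q1_def q2_def by (simp add: prod_eq_iff)
  have per_f: "h (x' + smul q1 (r, 0) + smul q2 (0, r)) = h x'" if "per (r, 0) h" "per (0, r) h" for h :: "'s config"
  proof -
    have "h (x' + smul q1 (r, 0) + smul q2 (0, r)) = h (x' + smul q1 (r, 0))"
      using per_smul[OF that(2), of q2] unfolding per_def by blast
    also have "\<dots> = h x'" using per_smul[OF that(1), of q1] unfolding per_def by blast
    finally show ?thesis .
  qed
  have "f x' = g x'"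
    by (rule ag) (simp_all add: x'_def r)
  thus "f x = g x" using per_f[OF f] per_f[OF g] xx by metis
qed

lemma unit_step:
  assumes r: "r > 0" and p: "per (r, 0) p" "per (0, r) p"
    and e: "e = (1, 0) \<or> e = (0, 1)"
    and g1: "good p r z v" and g2: "good p r z (v + e)"
  shows "ph p r z v = ph p r z (v + e)"
proof (rule agree_block[OF r ph_per[OF p(1)] ph_per[OF p(2)] ph_per[OF p(1)] ph_per[OF p(2)]])
  fix x :: "int \<times> int"
  let ?a1 = "fst v - r + fst e" and ?a2 = "snd v - r + snd e"
  assume x: "?a1 \<le> fst x" "fst x < ?a1 + r" "?a2 \<le> snd x" "snd x < ?a2 + r"
  have e01: "0 \<le> fst e" "fst e \<le> 1" "0 \<le> snd e" "snd e \<le> 1" using e by auto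
  have m1: "x - v \<in> sq r" unfolding mem_sq using x e01 by (simp add: abs_le_iff)
  have m2: "x - (v + e) \<in> sq r" unfolding mem_sq using x e01 by (simp add: abs_le_iff)
  have "z x = ph p r z v x" using good_ph[OF g1 m1] by simp
  moreover have "z x = ph p r z (v + e) x" using good_ph[OF g2 m2] by simp
  ultimately show "ph p r z v x = ph p r z (v + e) x" by simp
qed


lemma line_step:
  assumes r: "r > 0" and p: "per (r, 0) p" "per (0, r) p"
    and e: "e = (1, 0) \<or> e = (0, 1)"
    and G: "\<forall>v. lam \<alpha> \<beta> v > c \<longrightarrow> good p r z v"
    and x: "lam \<alpha> \<beta> x > c" and xk: "lam \<alpha> \<beta> (x + smul (int k) e) > c"
  shows "ph p r z x = ph p r z (x + smul (int k) e)"
proof -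
  have inr: "lam \<alpha> \<beta> (x + smul (int j) e) > c" if "j \<le> k" for j
  proof (cases "lam \<alpha> \<beta> e \<ge> 0")
    case True
    have "0 \<le> int j * lam \<alpha> \<beta> e" using True by simp
    thus ?thesis using x by simp
  next
    case False
    have "int k * lam \<alpha> \<beta> e \<le> int j * lam \<alpha> \<beta> e"
      using False that by (intro mult_right_mono_neg) simp_all
    thus ?thesis using xk by simp
  qed
  have "j \<le> k \<longrightarrow> ph p r z x = ph p r z (x + smul (int j) e)" for j
  proof (induction j)
    case 0
    have "x + smul (int 0) e = x" by (simp add: prod_eq_iff)
    then show ?case by simp
  next
    case (Suc j)
    show ?case
    proof
      assume j: "Suc j \<le> k"
      have eq: "x + smul (int (Suc j)) e = (x + smul (int j) e) + e" by (simp add: prod_eq_iff algebra_simps)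
      have g1: "good p r z (x + smul (int j) e)" using j by (intro G[rule_format] inr) simp
      have g2: "good p r z ((x + smul (int j) e) + e)" unfolding eq[symmetric] using j by (intro G[rule_format] inr) simp
      have "ph p r z (x + smul (int j) e) = ph p r z ((x + smul (int j) e) + e)"
        by (rule unit_step[OF r p e g1 g2])
      moreover have "ph p r z x = ph p r z (x + smul (int j) e)" using Suc.IH j by simp
      ultimately show "ph p r z x = ph p r z (x + smul (int (Suc j)) e)" unfolding eq by simp
    qed
  qed
  thus ?thesis by simp
qed

lemma line_int:
  assumes r: "r > 0" and p: "per (r, 0) p" "per (0, r) p"
    and e: "e = (1, 0) \<or> e = (0, 1)"
    and G: "\<forall>v. lam \<alpha> \<beta> v > c \<longrightarrow> good p r z v"
    and x: "lam \<alpha> \<beta> x > c" and xk: "lam \<alpha> \<beta> (x + smul k e) > c"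
  shows "ph p r z x = ph p r z (x + smul k e)"
proof (cases "k \<ge> 0")
  case True
  then obtain n where n: "k = int n" by (metis nonneg_eq_int)
  show ?thesis using line_step[OF r p e G x] xk n by simp
next
  case False
  let ?y = "x + smul k e"
  have eq: "?y + smul (int (nat (- k))) e = x" using False by (simp add: prod_eq_iff)
  have "ph p r z ?y = ph p r z (?y + smul (int (nat (- k))) e)"
    by (rule line_step[OF r p e G xk]) (simp only: eq x)
  hence "ph p r z ?y = ph p r z x" by (simp only: eq)
  thus ?thesis by (rule sym)
qed

lemma half_plane:
  assumes r: "r > 0" and p: "per (r, 0) p" "per (0, r) p"
    and G: "\<forall>v. lam \<alpha> \<beta> v > c \<longrightarrow> good p r z v"
    and x: "lam \<alpha> \<beta> x > c" and y: "lam \<alpha> \<beta> y > c"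
  shows "ph p r z x = ph p r z y"
proof -
  define m1 where "m1 = x + smul (fst y - fst x) (1, 0)"
  define m2 where "m2 = x + smul (snd y - snd x) (0, 1)"
  have y1: "y = m1 + smul (snd y - snd x) (0, 1)" by (simp add: m1_def prod_eq_iff)
  have y2: "y = m2 + smul (fst y - fst x) (1, 0)" by (simp add: m2_def prod_eq_iff)
  have "lam \<alpha> \<beta> m1 + lam \<alpha> \<beta> m2 = lam \<alpha> \<beta> x + lam \<alpha> \<beta> y"
    by (simp add: m1_def m2_def lam_def algebra_simps)
  hence "lam \<alpha> \<beta> m1 > c \<or> lam \<alpha> \<beta> m2 > c" using x y by linarith
  thus ?thesis
  proof
    assume m: "lam \<alpha> \<beta> m1 > c"
    have "ph p r z x = ph p r z m1"
      unfolding m1_def by (rule line_int[OF r p _ G x]) (use m m1_def in auto)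
    also have "\<dots> = ph p r z y"
      using line_int[OF r p _ G m, of "(0, 1)" "snd y - snd x"] y y1 by simp
    finally show ?thesis .
  next
    assume m: "lam \<alpha> \<beta> m2 > c"
    have "ph p r z x = ph p r z m2"
      unfolding m2_def by (rule line_int[OF r p _ G x]) (use m m2_def in auto)
    also have "\<dots> = ph p r z y"
      using line_int[OF r p _ G m, of "(1, 0)" "fst y - fst x"] y y2 by simp
    finally show ?thesis .
  qed
qed


lemma div_char:
  fixes L a k :: int
  assumes "L > 0" "k * L \<le> a" "a < k * L + L"
  shows "a div L = k"
proof -
  have "a div L = ((a - k * L) + k * L) div L" by simp
  also have "\<dots> = k + (a - k * L) div L" using assms(1) by (simp only: div_mult_self1)
  also have "(a - k * L) div L = 0" using assms by simp
  finally show ?thesis by simp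
qed

lemma div_bounds:
  fixes L a :: int
  assumes "L > 0"
  shows "(a div L) * L \<le> a" "a < (a div L) * L + L"
proof -
  have "a = (a div L) * L + a mod L" by simp
  moreover have "0 \<le> a mod L" "a mod L < L" using assms by simp_all
  ultimately show "(a div L) * L \<le> a" "a < (a div L) * L + L" by linarith+
qed

lemma lam_bound:
  assumes "u \<in> sq m"
  shows "\<bar>lam \<alpha> \<beta> u\<bar> \<le> m * (\<bar>\<alpha>\<bar> + \<bar>\<beta>\<bar>)"
proof -
  have u: "\<bar>fst u\<bar> \<le> m" "\<bar>snd u\<bar> \<le> m" using assms by (simp_all add: mem_sq)
  have "\<bar>\<alpha> * fst u\<bar> \<le> \<bar>\<alpha>\<bar> * m" unfolding abs_mult by (rule mult_left_mono[OF u(1)]) simp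
  moreover have "\<bar>\<beta> * snd u\<bar> \<le> \<bar>\<beta>\<bar> * m" unfolding abs_mult by (rule mult_left_mono[OF u(2)]) simp
  moreover have "\<bar>lam \<alpha> \<beta> u\<bar> \<le> \<bar>\<alpha> * fst u\<bar> + \<bar>\<beta> * snd u\<bar>"
    unfolding lam_def by (rule abs_triangle_ineq)
  ultimately show ?thesis by (simp add: algebra_simps)
qed

locale gluing =
  fixes z :: "'s config" and Q1 Q2 :: "'s config" and \<alpha> \<beta> c m L h :: int and g :: "int \<times> int"
  assumes Q1: "\<And>v. lam \<alpha> \<beta> v > c \<Longrightarrow> z v = Q1 v"
    and Q2: "\<And>v. lam \<alpha> \<beta> v < -c \<Longrightarrow> z v = Q2 v"
    and Q12: "\<And>x. Q1 x = Q2 (x - g)"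
    and Ldef: "L = lam \<alpha> \<beta> g" and hdef: "h = L div 2"
    and hbig: "h > c + m * (\<bar>\<alpha>\<bar> + \<bar>\<beta>\<bar>)" and c0: "c \<ge> 0" and m0: "m \<ge> 0"
begin

definition K :: "int \<times> int \<Rightarrow> int" where "K v = (lam \<alpha> \<beta> v + h) div L"

definition y :: "'s config" where "y v = z (v - smul (K v) g)"

lemma mu0: "m * (\<bar>\<alpha>\<bar> + \<bar>\<beta>\<bar>) \<ge> 0" using m0 by simp

lemma Lpos: "L > 0" and h2: "2 * h \<le> L"
proof -
  have "h > 0" using hbig c0 mu0 by linarith
  thus "L > 0" using hdef by linarith
  show "2 * h \<le> L" using hdef by linarith
qed

lemma Kb: "K v * L \<le> lam \<alpha> \<beta> v + h" "lam \<alpha> \<beta> v + h < K v * L + L"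
  unfolding K_def using div_bounds[OF Lpos] by blast+

lemma core:
  assumes w: "\<bar>lam \<alpha> \<beta> w - lam \<alpha> \<beta> c1\<bar> \<le> m * (\<bar>\<alpha>\<bar> + \<bar>\<beta>\<bar>)"
  shows "y w = z (w - smul (K c1) g)"
proof -
  define k0 where "k0 = K c1"
  define \<mu> where "\<mu> = m * (\<bar>\<alpha>\<bar> + \<bar>\<beta>\<bar>)"
  define u where "u = w - smul k0 g"
  have b0: "k0 * L \<le> lam \<alpha> \<beta> c1 + h" "lam \<alpha> \<beta> c1 + h < k0 * L + L" using Kb[of c1] k0_def by simp_all
  have lu: "lam \<alpha> \<beta> u = lam \<alpha> \<beta> w - k0 * L" by (simp add: u_def Ldef)
  have wb: "lam \<alpha> \<beta> w \<le> lam \<alpha> \<beta> c1 + \<mu>" "lam \<alpha> \<beta> w \<ge> lam \<alpha> \<beta> c1 - \<mu>" using w \<mu>_def by linarith+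
  have hb: "h > c + \<mu>" "\<mu> \<ge> 0" "2 * h \<le> L" "L > 0" "c \<ge> 0" using hbig mu0 h2 Lpos \<mu>_def c0 by simp_all
  consider (A) "k0 * L \<le> lam \<alpha> \<beta> w + h \<and> lam \<alpha> \<beta> w + h < k0 * L + L"
    | (B) "lam \<alpha> \<beta> w + h \<ge> k0 * L + L" | (C) "lam \<alpha> \<beta> w + h < k0 * L" by linarith
  then show ?thesis
  proof cases
    case A
    hence "K w = k0" unfolding K_def by (intro div_char[OF Lpos]) simp_all
    thus ?thesis by (simp add: y_def k0_def)
  next
    case B
    define k1 where "k1 = k0 + 1"
    have e: "k1 * L = k0 * L + L" by (simp add: k1_def algebra_simps)
    have i1: "k1 * L \<le> lam \<alpha> \<beta> w + h" using B e by linarith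
    have i2: "lam \<alpha> \<beta> w + h < k1 * L + L" using b0 wb hb e by linarith
    have "K w = k0 + 1" unfolding K_def k1_def[symmetric] using i1 i2 by (rule div_char[OF Lpos])
    moreover have "w - smul (k0 + 1) g = u - g" by (simp add: u_def prod_eq_iff algebra_simps)
    ultimately have "y w = z (u - g)" unfolding y_def by simp
    also have "\<dots> = Q2 (u - g)" using lu b0 wb hb by (intro Q2) (simp add: Ldef[symmetric])
    also have "\<dots> = Q1 u" using Q12 by simp
    also have "\<dots> = z u" using lu B b0 wb hb by (intro Q1[symmetric]) simp
    finally show ?thesis by (simp add: u_def k0_def)
  next
    case C
    define k1 where "k1 = k0 - 1"
    have e: "k1 * L = k0 * L - L" by (simp add: k1_def algebra_simps)
    have i1: "k1 * L \<le> lam \<alpha> \<beta> w + h" using b0 wb hb e by linarith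
    have i2: "lam \<alpha> \<beta> w + h < k1 * L + L" using C e by linarith
    have "K w = k0 - 1" unfolding K_def k1_def[symmetric] using i1 i2 by (rule div_char[OF Lpos])
    moreover have "w - smul (k0 - 1) g = u + g" by (simp add: u_def prod_eq_iff algebra_simps)
    ultimately have "y w = z (u + g)" unfolding y_def by simp
    also have "\<dots> = Q1 (u + g)" using lu b0 wb hb by (intro Q1) (simp add: Ldef[symmetric])
    also have "\<dots> = Q2 u" using Q12[of "u + g"] by simp
    also have "\<dots> = z u" using lu C b0 wb hb by (intro Q2[symmetric]) simp
    finally show ?thesis by (simp add: u_def k0_def)
  qed
qed

lemma occurs:
  assumes "dom P \<subseteq> sq m" "occurs_in P y"
  shows "occurs_in P z"
proof -
  obtain a b where ab: "\<forall>i j. (i, j) \<in> dom P \<longrightarrow> Some (y (i + a, j + b)) = P (i, j)"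
    using assms(2) unfolding occurs_in_def by blast
  define k0 where "k0 = K (a, b)"
  have "\<forall>i j. (i, j) \<in> dom P \<longrightarrow> Some (z (i + (a - k0 * fst g), j + (b - k0 * snd g))) = P (i, j)"
  proof (intro allI impI)
    fix i j assume ij: "(i, j) \<in> dom P"
    hence "(i, j) \<in> sq m" using assms(1) by blast
    hence lb: "\<bar>lam \<alpha> \<beta> (i, j)\<bar> \<le> m * (\<bar>\<alpha>\<bar> + \<bar>\<beta>\<bar>)" by (rule lam_bound)
    have "lam \<alpha> \<beta> (i + a, j + b) - lam \<alpha> \<beta> (a, b) = lam \<alpha> \<beta> (i, j)" by (simp add: lam_def algebra_simps)
    hence "y (i + a, j + b) = z ((i + a, j + b) - smul k0 g)" unfolding k0_def using lb by (intro core) simp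
    also have "(i + a, j + b) - smul k0 g = (i + (a - k0 * fst g), j + (b - k0 * snd g))" by (simp add: prod_eq_iff)
    finally show "Some (z (i + (a - k0 * fst g), j + (b - k0 * snd g))) = P (i, j)" using ab ij by metis
  qed
  thus ?thesis unfolding occurs_in_def by blast
qed

lemma per_g: "per g y"
  unfolding per_def
proof
  fix v
  have KK: "K (v + g) = K v + 1" unfolding K_def
  proof -
    have eq: "lam \<alpha> \<beta> (v + g) + h = (lam \<alpha> \<beta> v + h) + 1 * L" by (simp add: Ldef)
    have "(lam \<alpha> \<beta> (v + g) + h) div L = ((lam \<alpha> \<beta> v + h) + 1 * L) div L" by (simp only: eq)
    also have "\<dots> = 1 + (lam \<alpha> \<beta> v + h) div L" using Lpos by (intro div_mult_self1) simp
    finally have "(lam \<alpha> \<beta> (v + g) + h) div L = 1 + (lam \<alpha> \<beta> v + h) div L" .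
    thus "(lam \<alpha> \<beta> (v + g) + h) div L = (lam \<alpha> \<beta> v + h) div L + 1" by simp
  qed
  have vid: "v + g - smul (K v + 1) g = v - smul (K v) g" by (simp add: prod_eq_iff algebra_simps)
  have "y (v + g) = z (v + g - smul (K v + 1) g)" by (simp only: y_def KK)
  also have "\<dots> = y v" by (simp only: vid y_def)
  finally show "y (v + g) = y v" .
qed

lemma central: assumes "-h \<le> lam \<alpha> \<beta> v" "lam \<alpha> \<beta> v < h" shows "y v = z v"
proof -
  have "K v = 0" unfolding K_def using assms h2 by (intro div_pos_pos_trivial) simp_all
  moreover have "v - smul 0 g = v" by (simp add: prod_eq_iff)
  ultimately show ?thesis by (simp only: y_def)
qed

lemma per_d: assumes "lam \<alpha> \<beta> d = 0" "per d z" shows "per d y"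
  unfolding per_def
proof
  fix v
  have KK: "K (v + d) = K v" unfolding K_def using assms(1) by simp
  have vid: "v + d - smul (K v) g = (v - smul (K v) g) + d" by (simp add: prod_eq_iff algebra_simps)
  have "y (v + d) = z ((v - smul (K v) g) + d)" by (simp only: y_def KK vid)
  also have "\<dots> = z (v - smul (K v) g)" using assms(2) unfolding per_def by blast
  finally show "y (v + d) = y v" unfolding y_def .
qed

end


lemma good_agree:
  assumes "\<forall>u\<in>sq r. y u = x u"
  shows "good p r y 0 \<longleftrightarrow> good p r x 0"
  using assms unfolding good_def by auto

lemma good_sh: "good p r (sh s z) v \<longleftrightarrow> good p r z (v + s)"
proof -
  have "\<And>u. sh s z (v + u) = z ((v + s) + u)" unfolding sh_def by (simp add: add_ac)
  thus ?thesis unfolding good_def by simp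
qed

lemma good_per:
  assumes "good p r z v" "r \<ge> 0" "per (r, 0) p" "per (0, r) p"
  shows "z (v + (r, 0)) = z v" "z (v + (0, r)) = z v"
proof -
  obtain t where t: "\<forall>u\<in>sq r. z (v + u) = p (t + u)" using assms(1) unfolding good_def by blast
  have s: "(0::int\<times>int) \<in> sq r" "((r, 0)::int\<times>int) \<in> sq r" "((0, r)::int\<times>int) \<in> sq r"
    using assms(2) by (simp_all add: mem_sq)
  have "z v = p t" using t s(1) by (metis add_0_right)
  moreover have "z (v + (r, 0)) = p (t + (r, 0))" using t s(2) by blast
  moreover have "z (v + (0, r)) = p (t + (0, r))" using t s(3) by blast
  moreover have "p (t + (r, 0)) = p t" "p (t + (0, r)) = p t" using assms(3,4) unfolding per_def by blast+
  ultimately show "z (v + (r, 0)) = z v" "z (v + (0, r)) = z v" by simp_all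
qed

lemma all_good_dp:
  assumes "\<forall>v. good p r z v" "r > 0" "per (r, 0) p" "per (0, r) p"
  shows "doubly_periodic z"
proof -
  have "per (r, 0) z" "per (0, r) z"
    using good_per[OF _ _ assms(3,4)] assms(1,2) unfolding per_def by auto
  thus ?thesis by (rule dp_two) (use assms(2) in simp)
qed

lemma np_good:
  assumes "subpat_ge p y"
  shows "good p r y v"
proof -
  define P :: "'a pattern" where "P = (\<lambda>u. if u \<in> sq r then Some (y (v + u)) else None)"
  have domP: "dom P = sq r" unfolding P_def by (auto split: if_splits)
  have fp: "finite_pattern P" unfolding finite_pattern_def domP by simp
  have "occurs_in P y" unfolding occurs_in_def
  proof (rule exI[of _ "fst v"], rule exI[of _ "snd v"], intro allI impI)
    fix i j assume "(i, j) \<in> dom P"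
    hence "(i, j) \<in> sq r" using domP by simp
    moreover have "v + (i, j) = (i + fst v, j + snd v)" by (simp add: prod_eq_iff)
    ultimately show "Some (y (i + fst v, j + snd v)) = P (i, j)" unfolding P_def by simp
  qed
  hence "occurs_in P p" using assms fp unfolding subpat_ge_def by blast
  then obtain a b where ab: "\<forall>i j. (i, j) \<in> dom P \<longrightarrow> Some (p (i + a, j + b)) = P (i, j)"
    unfolding occurs_in_def by blast
  have "\<forall>u\<in>sq r. y (v + u) = p ((a, b) + u)"
  proof
    fix u assume u: "u \<in> sq r"
    obtain i j where u': "u = (i, j)" by (cases u)
    have "Some (p (i + a, j + b)) = P (i, j)" using ab u u' domP by blast
    hence "p (i + a, j + b) = y (v + u)" using u u' unfolding P_def by simp
    moreover have "(a, b) + u = (i + a, j + b)" using u' by simp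
    ultimately show "y (v + u) = p ((a, b) + u)" by simp
  qed
  thus ?thesis unfolding good_def by blast
qed

lemma sft_X_inv:
  assumes "\<forall>P\<in>F. \<not> occurs_in P x"
  shows "\<forall>P\<in>F. \<not> occurs_in P (sh s x)"
proof (intro ballI notI)
  fix P assume P: "P \<in> F" "occurs_in P (sh s x)"
  then obtain a b where ab: "\<forall>i j. (i, j) \<in> dom P \<longrightarrow> Some (sh s x (i + a, j + b)) = P (i, j)"
    unfolding occurs_in_def by blast
  have "\<forall>i j. (i, j) \<in> dom P \<longrightarrow> Some (x (i + (a + fst s), j + (b + snd s))) = P (i, j)"
  proof (intro allI impI)
    fix i j assume "(i, j) \<in> dom P"
    moreover have "(i + a, j + b) + s = (i + (a + fst s), j + (b + snd s))"
      by (simp add: prod_eq_iff add_ac)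
    hence "sh s x (i + a, j + b) = x (i + (a + fst s), j + (b + snd s))"
      unfolding sh_def by simp
    ultimately show "Some (x (i + (a + fst s), j + (b + snd s))) = P (i, j)" using ab by metis
  qed
  hence "occurs_in P x" unfolding occurs_in_def by blast
  thus False using assms P(1) by blast
qed

lemma sft_X_cclosed:
  assumes F: "\<forall>P\<in>F. finite_pattern P"
  shows "cclosed {x. \<forall>P\<in>F. \<not> occurs_in P x}"
  unfolding cclosed_def
proof (intro allI impI CollectI ballI notI)
  fix x P
  assume h: "\<forall>n. \<exists>y\<in>{x. \<forall>P\<in>F. \<not> occurs_in P x}. y \<in> cyl n x" and P: "P \<in> F" "occurs_in P x"
  then obtain a b where ab: "\<forall>i j. (i, j) \<in> dom P \<longrightarrow> Some (x (i + a, j + b)) = P (i, j)"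
    unfolding occurs_in_def by blast
  obtain m where m: "m \<ge> 0" "dom P \<subseteq> sq m" using F P(1) finite_in_box unfolding finite_pattern_def by blast
  obtain y where y: "\<forall>P\<in>F. \<not> occurs_in P y" "y \<in> cyl (m + \<bar>a\<bar> + \<bar>b\<bar>) x" using h by blast
  have "\<forall>i j. (i, j) \<in> dom P \<longrightarrow> Some (y (i + a, j + b)) = P (i, j)"
  proof (intro allI impI)
    fix i j assume ij: "(i, j) \<in> dom P"
    hence "\<bar>i\<bar> \<le> m" "\<bar>j\<bar> \<le> m" using m(2) by (auto simp: mem_sq)
    hence "(i + a, j + b) \<in> sq (m + \<bar>a\<bar> + \<bar>b\<bar>)" unfolding mem_sq by simp (use abs_triangle_ineq[of i a] abs_triangle_ineq[of j b] in linarith)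
    hence "y (i + a, j + b) = x (i + a, j + b)" using y(2) unfolding cyl_def by blast
    thus "Some (y (i + a, j + b)) = P (i, j)" using ab ij by metis
  qed
  hence "occurs_in P y" unfolding occurs_in_def by blast
  thus False using y(1) P(1) by blast
qed


lemma lam_neg[simp]: "lam (-a) (-b) v = - lam a b v"
  by (simp add: lam_def)

lemma per_sub: "per q p \<Longrightarrow> p (w - q) = p w"
  unfolding per_def by (metis diff_add_cancel)

lemma caseB:
  fixes z p :: "('s::finite) config" and F :: "'s pattern set"
  assumes Xz: "\<forall>P\<in>F. \<not> occurs_in P z" and Fm: "\<forall>P\<in>F. dom P \<subseteq> sq m" and m0: "m \<ge> 0"
    and r: "r > 0" and p: "per (r, 0) p" "per (0, r) p"
    and d: "per d z" "d \<noteq> 0"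
    and bnd: "\<forall>v. \<not> good p r z v \<longrightarrow> \<bar>lam (- snd d) (fst d) v\<bar> \<le> c" and c0: "c \<ge> 0"
    and bad: "\<not> good p r z 0"
  shows "\<exists>y. (\<forall>P\<in>F. \<not> occurs_in P y) \<and> doubly_periodic y \<and> \<not> good p r y 0"
proof -
  define \<alpha> where "\<alpha> = - snd d"
  define \<beta> where "\<beta> = fst d"
  have bnd': "\<bar>lam \<alpha> \<beta> v\<bar> \<le> c" if "\<not> good p r z v" for v
    using bnd that unfolding \<alpha>_def \<beta>_def by blast
  have Gp: "\<forall>v. lam \<alpha> \<beta> v > c \<longrightarrow> good p r z v"
  proof (intro allI impI)
    fix v assume "lam \<alpha> \<beta> v > c"
    thus "good p r z v" using bnd'[of v] by linarith
  qed
  have Gm: "\<forall>v. lam (-\<alpha>) (-\<beta>) v > c \<longrightarrow> good p r z v"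
  proof (intro allI impI)
    fix v assume a: "lam (-\<alpha>) (-\<beta>) v > c"
    have "lam (-\<alpha>) (-\<beta>) v = - lam \<alpha> \<beta> v" by (rule lam_neg)
    thus "good p r z v" using a bnd'[of v] by linarith
  qed
  obtain e where e: "e = (1, 0) \<or> e = (0, 1)" "lam \<alpha> \<beta> e \<noteq> 0"
  proof (cases "\<beta> = 0")
    case True
    hence "snd d \<noteq> 0" using d(2) \<beta>_def by (simp add: prod_eq_iff)
    hence "lam \<alpha> \<beta> (1, 0) \<noteq> 0" using True by (simp add: lam_def \<alpha>_def)
    thus ?thesis using that by blast
  next
    case False
    hence "lam \<alpha> \<beta> (0, 1) \<noteq> 0" by (simp add: lam_def)
    thus ?thesis using that by blast
  qed
  define l where "l = lam \<alpha> \<beta> e"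
  have l2: "l * l \<ge> 1"
  proof -
    have "l \<noteq> 0" using e(2) l_def by simp
    hence "l * l > 0" by (simp add: zero_less_mult_iff linorder_neq_iff) blast
    thus ?thesis by simp
  qed
  define ap where "ap = smul ((c + 1) * l) e"
  define am where "am = smul (- ((c + 1) * l)) e"
  have big: "(c + 1) * (l * l) \<ge> c + 1" using l2 c0 mult_left_mono[OF l2, of "c + 1"] by simp
  have "lam \<alpha> \<beta> ap = (c + 1) * (l * l)" unfolding ap_def lam_smul l_def by (simp add: algebra_simps)
  hence lap: "lam \<alpha> \<beta> ap > c" using big by linarith
  have "lam (-\<alpha>) (-\<beta>) am = (c + 1) * (l * l)" unfolding am_def lam_neg lam_smul l_def by (simp add: algebra_simps)
  hence lam': "lam (-\<alpha>) (-\<beta>) am > c" using big by linarith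
  define Q1 where "Q1 = ph p r z ap"
  define Q2 where "Q2 = ph p r z am"
  have HQ1: "z v = Q1 v" if "lam \<alpha> \<beta> v > c" for v
  proof -
    have "z v = ph p r z v v" by (rule good_self[OF Gp[rule_format, OF that]]) (use r in simp)
    also have "ph p r z v = Q1" unfolding Q1_def by (rule half_plane[OF r p Gp that lap])
    finally show ?thesis .
  qed
  have HQ2: "z v = Q2 v" if "lam \<alpha> \<beta> v < - c" for v
  proof -
    have v: "lam (-\<alpha>) (-\<beta>) v > c" using that by simp
    have "z v = ph p r z v v" by (rule good_self[OF Gm[rule_format, OF v]]) (use r in simp)
    also have "ph p r z v = Q2" unfolding Q2_def by (rule half_plane[OF r p Gm v lam'])
    finally show ?thesis .
  qed
  define s1 where "s1 = sft p r z ap"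
  define s2 where "s2 = sft p r z am"
  define \<mu> where "\<mu> = (m + r) * (\<bar>\<alpha>\<bar> + \<bar>\<beta>\<bar>)"
  define KK where "KK = \<bar>lam \<alpha> \<beta> (s2 - s1)\<bar> + 2 * (c + \<mu>) + 2"
  define q where "q = smul (KK * l * r) e"
  define g where "g = s2 - s1 + q"
  have perq: "per q p"
  proof -
    have "q = smul (KK * l) (r, 0) \<or> q = smul (KK * l) (0, r)" using e(1) unfolding q_def by (auto simp: prod_eq_iff)
    thus ?thesis using per_smul[OF p(1)] per_smul[OF p(2)] by metis
  qed
  have Q12: "Q1 x = Q2 (x - g)" for x
  proof -
    have "Q2 (x - g) = p ((x + s1) - q)" unfolding Q2_def ph_def s2_def[symmetric] g_def
      by (simp add: prod_eq_iff algebra_simps)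
    also have "\<dots> = p (x + s1)" by (rule per_sub[OF perq])
    also have "\<dots> = Q1 x" unfolding Q1_def ph_def s1_def ..
    finally show ?thesis ..
  qed
  define L where "L = lam \<alpha> \<beta> g"
  have L: "L = lam \<alpha> \<beta> (s2 - s1) + KK * (r * (l * l))"
    by (simp add: L_def g_def q_def l_def algebra_simps)
  have \<mu>0: "\<mu> \<ge> 0" using m0 r \<mu>_def by simp
  have KK0: "KK \<ge> 0" using c0 \<mu>0 KK_def by simp
  have rl: "r * (l * l) \<ge> 1" using r l2 by (metis mult_le_cancel_left1 mult.commute mult_less_cancel_left2 not_le zero_less_one_class.zero_le_one order_less_le_trans less_le_not_le linorder_not_less mult_le_cancel_left2 mult_le_cancel_right1 mult_left_mono order.trans  int_one_le_iff_zero_less mult_pos_pos)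
  have "KK * (r * (l * l)) \<ge> KK * 1" using rl KK0 by (rule mult_left_mono)
  hence Lb: "L \<ge> 2 * (c + \<mu>) + 2" using L KK_def abs_ge_minus_self[of "lam \<alpha> \<beta> (s2 - s1)"] by linarith
  define h where "h = L div 2"
  have two: "(0::int) < 2" by simp
  have hb: "h \<ge> c + \<mu> + 1" using Lb h_def div_bounds[OF two, of L] by (simp only: h_def[symmetric]) presburger
  have mu1: "m * (\<bar>\<alpha>\<bar> + \<bar>\<beta>\<bar>) \<le> \<mu>" "r * (\<bar>\<alpha>\<bar> + \<bar>\<beta>\<bar>) \<le> \<mu>"
    using m0 r unfolding \<mu>_def by (simp_all add: algebra_simps)
  interpret G: gluing z Q1 Q2 \<alpha> \<beta> c m L h g
    by unfold_locales (use HQ1 HQ2 Q12 L_def h_def hb mu1 c0 m0 in auto)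
  have yX: "\<forall>P\<in>F. \<not> occurs_in P G.y" using G.occurs Fm Xz by blast
  have pg: "per g G.y" by (rule G.per_g)
  have pd: "per d G.y" by (rule G.per_d) (simp_all add: d(1) lam_def \<alpha>_def \<beta>_def)
  have "fst d * snd g - snd d * fst g = L" by (simp add: L_def lam_def \<alpha>_def \<beta>_def)
  moreover have "L > 0" using G.Lpos .
  ultimately have dp: "doubly_periodic G.y" using dp_two[OF pd pg] by simp
  have "\<forall>u\<in>sq r. G.y u = z u"
  proof
    fix u assume u: "u \<in> sq r"
    have "\<bar>lam \<alpha> \<beta> u\<bar> \<le> r * (\<bar>\<alpha>\<bar> + \<bar>\<beta>\<bar>)" by (rule lam_bound[OF u])
    hence "- h \<le> lam \<alpha> \<beta> u" "lam \<alpha> \<beta> u < h" using mu1 hb c0 by linarith+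
    thus "G.y u = z u" by (rule G.central)
  qed
  hence "\<not> good p r G.y 0" using bad good_agree by blast
  thus ?thesis using yX dp by blast
qed


lemma caseA:
  fixes z p :: "('s::finite) config" and F :: "'s pattern set"
  assumes Xz: "\<forall>P\<in>F. \<not> occurs_in P z" and Fm: "\<forall>P\<in>F. dom P \<subseteq> sq m" and m0: "m \<ge> 0"
    and r: "r > 0" and p: "per (r, 0) p" "per (0, r) p"
    and n0: "n \<ge> 0" and Dn: "\<And>v. v \<notin> sq n \<Longrightarrow> good p r z v"
    and bad: "\<not> good p r z 0"
  shows "\<exists>y. (\<forall>P\<in>F. \<not> occurs_in P y) \<and> doubly_periodic y \<and> \<not> good p r y 0"
proof -
  have Gen: "\<forall>v. lam a b v > n \<longrightarrow> good p r z v" if "\<And>v. lam a b v > n \<Longrightarrow> v \<notin> sq n" for a b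
    using Dn that by blast
  have G1: "\<forall>v. lam 1 0 v > n \<longrightarrow> good p r z v"
    by (rule Gen) (auto simp: lam_def mem_sq)
  have G2: "\<forall>v. lam (-1) 0 v > n \<longrightarrow> good p r z v"
    by (rule Gen) (auto simp: lam_def mem_sq)
  have G3: "\<forall>v. lam 0 1 v > n \<longrightarrow> good p r z v"
    by (rule Gen) (auto simp: lam_def mem_sq)
  have G4: "\<forall>v. lam 0 (-1) v > n \<longrightarrow> good p r z v"
    by (rule Gen) (auto simp: lam_def mem_sq)
  define Q where "Q = ph p r z (n + 1, n + 1)"
  have phQ: "ph p r z v = Q" if v: "v \<notin> sq n" for v
  proof -
    have "fst v > n \<or> snd v > n \<or> fst v < -n \<or> snd v < -n" using v by (auto simp: mem_sq)
    thus ?thesis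
    proof (elim disjE)
      assume "fst v > n"
      thus ?thesis unfolding Q_def by (intro half_plane[OF r p G1]) (simp_all add: lam_def)
    next
      assume "snd v > n"
      thus ?thesis unfolding Q_def by (intro half_plane[OF r p G3]) (simp_all add: lam_def)
    next
      assume a: "fst v < -n"
      have "ph p r z v = ph p r z (-n-1, n+1)" using a by (intro half_plane[OF r p G2]) (simp_all add: lam_def)
      also have "\<dots> = Q" unfolding Q_def by (intro half_plane[OF r p G3]) (simp_all add: lam_def)
      finally show ?thesis .
    next
      assume a: "snd v < -n"
      have "ph p r z v = ph p r z (n+1, -n-1)" using a by (intro half_plane[OF r p G4]) (simp_all add: lam_def)
      also have "\<dots> = Q" unfolding Q_def by (intro half_plane[OF r p G1]) (simp_all add: lam_def)
      finally show ?thesis .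
    qed
  qed
  have zQ: "z v = Q v" if v: "v \<notin> sq n" for v
  proof -
    have "z v = ph p r z v v" by (rule good_self[OF Dn[OF v]]) (use r in simp)
    thus ?thesis using phQ[OF v] by simp
  qed
  define N where "N = 2 * (n + m + r) + 2"
  define M where "M = r * N"
  have N0: "N > 0" using n0 m0 r N_def by simp
  have MN: "M \<ge> N" unfolding M_def using r N0 by simp
  have QrM: "per (M, 0) Q" "per (0, M) Q"
  proof -
    have "(M, 0) = smul N (r, 0)" "(0, M) = smul N (0, r)" by (simp_all add: M_def prod_eq_iff mult.commute)
    thus "per (M, 0) Q" "per (0, M) Q" using per_smul ph_per p unfolding Q_def by metis+
  qed
  define h where "h = M div 2"
  have two: "(0::int) < 2" by simp
  have hb: "h \<ge> n + m + r + 1" using MN N_def h_def div_bounds[OF two, of M] by (simp only: h_def[symmetric]) presburger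
  interpret A: gluing z Q Q 1 0 n m M h "(M, 0)"
  proof unfold_locales
    show "\<And>v. lam 1 0 v > n \<Longrightarrow> z v = Q v" by (rule zQ) (auto simp: lam_def mem_sq)
    show "\<And>v. lam 1 0 v < - n \<Longrightarrow> z v = Q v" by (rule zQ) (auto simp: lam_def mem_sq)
    show "\<And>x. Q x = Q (x - (M, 0))" using per_sub[OF QrM(1)] by simp
  qed (use h_def hb n0 m0 r in \<open>simp_all add: lam_def\<close>)
  have y1X: "\<forall>P\<in>F. \<not> occurs_in P A.y" using A.occurs Fm Xz by blast
  have y1Q: "A.y v = Q v" if v: "snd v > n \<or> snd v < -n" for v
  proof -
    define w where "w = v - smul (A.K v) (M, 0)"
    have "A.y v = z w" unfolding A.y_def w_def ..
    also have "\<dots> = Q w" by (rule zQ) (use v in \<open>auto simp: w_def mem_sq\<close>)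
    also have "\<dots> = Q v" unfolding w_def by (rule per_sub[OF per_smul[OF QrM(1)]])
    finally show ?thesis .
  qed
  interpret B: gluing A.y Q Q 0 1 n m M h "(0, M)"
  proof unfold_locales
    show "\<And>v. lam 0 1 v > n \<Longrightarrow> A.y v = Q v" by (rule y1Q) (simp add: lam_def)
    show "\<And>v. lam 0 1 v < - n \<Longrightarrow> A.y v = Q v" by (rule y1Q) (simp add: lam_def)
    show "\<And>x. Q x = Q (x - (0, M))" using per_sub[OF QrM(2)] by simp
  qed (use h_def hb n0 m0 r in \<open>simp_all add: lam_def\<close>)
  have yX: "\<forall>P\<in>F. \<not> occurs_in P B.y" using B.occurs Fm y1X by blast
  have pg: "per (0, M) B.y" by (rule B.per_g)
  have pd: "per (M, 0) B.y" by (rule B.per_d) (simp_all add: lam_def A.per_g)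
  have "M > 0" using MN N0 by simp
  hence dp: "doubly_periodic B.y" by (intro dp_two[OF pd pg]) simp
  have "\<forall>u\<in>sq r. B.y u = z u"
  proof
    fix u assume u: "u \<in> sq r"
    hence b: "\<bar>fst u\<bar> \<le> r" "\<bar>snd u\<bar> \<le> r" by (simp_all add: mem_sq)
    have "B.y u = A.y u" by (rule B.central) (use b hb n0 m0 in \<open>simp_all add: lam_def\<close>)
    also have "\<dots> = z u" by (rule A.central) (use b hb n0 m0 in \<open>simp_all add: lam_def\<close>)
    finally show "B.y u = z u" .
  qed
  hence "\<not> good p r B.y 0" using bad good_agree by blast
  thus ?thesis using yX dp by blast
qed


theorem mainTheorem11:
  fixes X :: "('s::finite) config set"
  assumes "is_SFT X"
    and "countable X"
    and "\<exists>x\<in>X. \<exists>y\<in>X. \<not> subpat_equiv x y"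
  shows "\<exists>x\<in>X. \<exists>y\<in>X. doubly_periodic x \<and> doubly_periodic y \<and> \<not> subpat_equiv x y"
proof (rule ccontr)
  assume nc: "\<not> (\<exists>x\<in>X. \<exists>y\<in>X. doubly_periodic x \<and> doubly_periodic y \<and> \<not> subpat_equiv x y)"
  have H: "subpat_equiv x y" if "x \<in> X" "y \<in> X" "doubly_periodic x" "doubly_periodic y" for x y
    using nc that by blast
  obtain F where F: "finite F" "\<forall>P\<in>F. finite_pattern P" "X = {x. \<forall>P\<in>F. \<not> occurs_in P x}"
    using assms(1) unfolding is_SFT_def by blast
  have "finite (\<Union>(dom ` F))" using F(1,2) unfolding finite_pattern_def by blast
  then obtain m where m: "m \<ge> 0" "\<Union>(dom ` F) \<subseteq> sq m" using finite_in_box by blast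
  have Fm: "\<forall>P\<in>F. dom P \<subseteq> sq m" using m(2) by blast
  have Xcl: "cclosed X" using sft_X_cclosed[OF F(2)] F(3) by simp
  have Xinv: "inv X" unfolding inv_def F(3) using sft_X_inv by blast
  obtain x0 y0 where xy: "x0 \<in> X" "y0 \<in> X" "\<not> subpat_equiv x0 y0" using assms(3) by blast
  have "X \<inter> X \<noteq> {}" using xy(1) by blast
  then obtain p where p: "p \<in> X \<inter> X" "\<forall>V. (\<forall>v\<in>V. sh v p \<in> X) \<longrightarrow> finite ((\<lambda>v. sh v p) ` V)"
    using key_finite[OF Xcl Xinv assms(2) Xcl] by blast
  have "\<forall>v\<in>UNIV. sh v p \<in> X" using p(1) Xinv unfolding inv_def by blast
  hence "finite (range (\<lambda>v. sh v p))" using p(2) by blast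
  hence dpp: "doubly_periodic p" by (rule finite_orbit_dp)
  obtain r where r: "r > 0" "per (r, 0) p" "per (0, r) p" using dp_per[OF dpp] by blast
  have NP: "good p r y v" if "y \<in> X" "doubly_periodic y" for y v
  proof -
    have "subpat_equiv y p" using H[OF that(1) _ that(2) dpp] p(1) by blast
    hence "subpat_ge p y" unfolding subpat_equiv_def by blast
    thus ?thesis by (rule np_good)
  qed
  have "\<exists>z1\<in>X. \<exists>v. \<not> good p r z1 v"
  proof (rule ccontr)
    assume "\<not> (\<exists>z1\<in>X. \<exists>v. \<not> good p r z1 v)"
    hence "\<forall>v. good p r x0 v" "\<forall>v. good p r y0 v" using xy by blast+
    hence "doubly_periodic x0" "doubly_periodic y0" using all_good_dp r by blast+
    thus False using H xy by blast
  qed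
  then obtain z1 v1 where z1: "z1 \<in> X" "\<not> good p r z1 v1" by blast
  define E where "E = {w \<in> X. \<not> good p r w 0}"
  have Ecl: "cclosed E"
    unfolding cclosed_def
  proof (intro allI impI)
    fix x assume h: "\<forall>n. \<exists>y\<in>E. y \<in> cyl n x"
    hence "\<forall>n. \<exists>y\<in>X. y \<in> cyl n x" unfolding E_def by blast
    hence xX: "x \<in> X" using Xcl unfolding cclosed_def by blast
    obtain y where y: "y \<in> E" "y \<in> cyl r x" using h by blast
    have "\<forall>u\<in>sq r. y u = x u" using y(2) unfolding cyl_def by blast
    hence "good p r y 0 \<longleftrightarrow> good p r x 0" by (rule good_agree)
    thus "x \<in> E" using y(1) xX unfolding E_def by blast
  qed
  have gsh: "good p r (sh v w) 0 \<longleftrightarrow> good p r w v" for v w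
    using good_sh[of p r v w 0] by simp
  have "sh v1 z1 \<in> X \<inter> E" using z1 Xinv gsh unfolding E_def inv_def by blast
  hence "X \<inter> E \<noteq> {}" by blast
  then obtain z where z: "z \<in> X \<inter> E" "\<forall>V. (\<forall>v\<in>V. sh v z \<in> E) \<longrightarrow> finite ((\<lambda>v. sh v z) ` V)"
    using key_finite[OF Xcl Xinv assms(2) Ecl] by blast
  define D where "D = {v. \<not> good p r z v}"
  have DE: "\<forall>v\<in>D. sh v z \<in> E" using z(1) Xinv gsh unfolding E_def D_def inv_def by blast
  have finD: "finite ((\<lambda>v. sh v z) ` D)" using z(2) DE by blast
  have zX: "\<forall>P\<in>F. \<not> occurs_in P z" using z(1) F(3) by blast
  have bad: "\<not> good p r z 0" using z(1) E_def by blast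
  have ndp: "\<not> doubly_periodic z" using NP bad z(1) by blast
  have "\<exists>y. (\<forall>P\<in>F. \<not> occurs_in P y) \<and> doubly_periodic y \<and> \<not> good p r y 0"
  proof (cases "finite D")
    case True
    obtain n where n: "n \<ge> 0" "D \<subseteq> sq n" using finite_in_box[OF True] by blast
    have Dn: "good p r z v" if "v \<notin> sq n" for v using n(2) that unfolding D_def by blast
    show ?thesis by (rule caseA[OF zX Fm m(1) r n(1) Dn bad])
  next
    case False
    have "\<not> inj_on (\<lambda>v. sh v z) D" using False finD finite_imageD by blast
    then obtain v v' where vv: "v \<in> D" "v' \<in> D" "v \<noteq> v'" "sh v z = sh v' z" unfolding inj_on_def by blast
    define d where "d = v - v'"
    have pd: "per d z" using sh_eq_per vv(4) d_def by blast
    have d0: "d \<noteq> 0" using vv(3) d_def by simp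
    obtain D0 where D0: "D0 \<subseteq> D" "finite D0" "(\<lambda>v. sh v z) ` D = (\<lambda>v. sh v z) ` D0"
      using finite_subset_image[OF finD subset_refl] by blast
    define c where "c = (\<Sum>w\<in>D0. \<bar>lam (- snd d) (fst d) w\<bar>)"
    have c0: "c \<ge> 0" unfolding c_def by (rule sum_nonneg) simp
    have bnd: "\<forall>w. \<not> good p r z w \<longrightarrow> \<bar>lam (- snd d) (fst d) w\<bar> \<le> c"
    proof (intro allI impI)
      fix w assume "\<not> good p r z w"
      hence w: "w \<in> D" unfolding D_def by blast
      hence "sh w z \<in> (\<lambda>v. sh v z) ` D0" using D0(3) by blast
      then obtain w0 where w0: "w0 \<in> D0" "sh w z = sh w0 z" by blast
      have pw: "per (w - w0) z" using sh_eq_per w0(2) by blast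
      have l0: "lam (- snd d) (fst d) (w - w0) = 0"
      proof (rule ccontr)
        assume ne: "lam (- snd d) (fst d) (w - w0) \<noteq> 0"
        have "doubly_periodic z" by (rule dp_two[OF pd pw]) (use ne in \<open>simp add: lam_def algebra_simps\<close>)
        thus False using ndp by blast
      qed
      have "lam (- snd d) (fst d) w = lam (- snd d) (fst d) w0" using l0 by simp
      moreover have "\<bar>lam (- snd d) (fst d) w0\<bar> \<le> c" unfolding c_def
        by (rule member_le_sum) (use w0(1) D0(2) in auto)
      ultimately show "\<bar>lam (- snd d) (fst d) w\<bar> \<le> c" by simp
    qed
    show ?thesis by (rule caseB[OF zX Fm m(1) r(1) r(2) r(3) pd d0 bnd c0 bad])
  qed
  then obtain y where y: "\<forall>P\<in>F. \<not> occurs_in P y" "doubly_periodic y" "\<not> good p r y 0" by blast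
  have "y \<in> X" using y(1) F(3) by blast
  hence "good p r y 0" using NP y(2) by blast
  thus False using y(3) by blast
qed

end
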